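(* Let $X_1=X_2=X_3=[0,1]$, each $\mu_{ij}$ Lebesgue measure on $[0,1]^2$, and $c(x_1,x_2,x_3)=\max(0,x_1+x_2+3x_3-3)$. Define $f_{12}\equiv0$ on $[0,1]^2$, $f_{13}(x_1,x_3)=0$ if $x_3<\frac23$ and $f_{13}(x_1,x_3)=x_1+\frac32x_3-\frac32$ if $x_3\ge\frac23$, $f_{23}(x_2,x_3)=0$ if $x_3<\frac23$ and $f_{23}(x_2,x_3)=x_2+\frac32x_3-\frac32$ if $x_3\ge\frac23$. Then $f_{12}(x_1,x_2)+f_{13}(x_1,x_3)+f_{23}(x_2,x_3)\le c(x_1,x_2,x_3)$ on $[0,1]^3$, the tuple $\{f_{ij}\}$ maximizes $\sum_{i<j}\int f_{ij}\,d\mu_{ij}$ among all tuples of integrable functions satisfying this inequality (i.e. it solves the dual problem), and there exists a probability measure $\pi$ on $[0,1]^3$ with $\mathrm{Pr}_{ij}(\pi)=\mu_{ij}$ for all $i<j$, concentrated on $\{(x_1,x_2,x_3):x_1+x_2+3x_3\in\mathbb{Z}\}$, which minimizes $\int c\,d\pi$ among all such measures.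
   Context: $\mathrm{Pr}_{ij}$ is the projection of $[0,1]^3$ onto coordinates $(i,j)$. *)

theory Defs
  imports "HOL-Probability.Probability"
begin

definition unit_sq :: "(real \<times> real) set" where
  "unit_sq = {0..1} \<times> {0..1}"

definition unit_cube :: "(real \<times> real \<times> real) set" where
  "unit_cube = {0..1} \<times> {0..1} \<times> {0..1}"

text \<open>Lebesgue measure on [0,1]^2 as a Borel measure (used for marginals).\<close>
definition mu2 :: "(real \<times> real) measure" where
  "mu2 = restrict_space lborel unit_sq"

text \<open>Lebesgue measure on [0,1]^2 on Lebesgue-measurable sets (integrability class for the dual).\<close>
definition mu2L :: "(real \<times> real) measure" where
  "mu2L = lebesgue_on unit_sq"

definition cost :: "real \<times> real \<times> real \<Rightarrow> real" where
  "cost p = (case p of (x1, x2, x3) \<Rightarrow> max 0 (x1 + x2 + 3 * x3 - 3))"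

definition pr12 :: "real \<times> real \<times> real \<Rightarrow> real \<times> real" where
  "pr12 p = (case p of (x1, x2, x3) \<Rightarrow> (x1, x2))"
definition pr13 :: "real \<times> real \<times> real \<Rightarrow> real \<times> real" where
  "pr13 p = (case p of (x1, x2, x3) \<Rightarrow> (x1, x3))"
definition pr23 :: "real \<times> real \<times> real \<Rightarrow> real \<times> real" where
  "pr23 p = (case p of (x1, x2, x3) \<Rightarrow> (x2, x3))"

definition coupling :: "(real \<times> real \<times> real) measure \<Rightarrow> bool" where
  "coupling \<pi> \<longleftrightarrow> prob_space \<pi> \<and> sets \<pi> = sets (restrict_space borel unit_cube)
     \<and> distr \<pi> mu2 pr12 = mu2 \<and> distr \<pi> mu2 pr13 = mu2 \<and> distr \<pi> mu2 pr23 = mu2"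

definition f12 :: "real \<Rightarrow> real \<Rightarrow> real" where
  "f12 x1 x2 = 0"
definition f13 :: "real \<Rightarrow> real \<Rightarrow> real" where
  "f13 x1 x3 = (if x3 < 2/3 then 0 else x1 + 3/2 * x3 - 3/2)"
definition f23 :: "real \<Rightarrow> real \<Rightarrow> real" where
  "f23 x2 x3 = (if x3 < 2/3 then 0 else x2 + 3/2 * x3 - 3/2)"

end

theory Submission
  imports Defs
begin

definition rr :: "real \<Rightarrow> real \<Rightarrow> real" where
  "rr a b = (if a + b < 1 then 1 - a - b else 2 - a - b)"

lemma rr_meas[measurable]: "(\<lambda>p. rr (f p) (g p)) \<in> borel_measurable M"
  if [measurable]: "f \<in> borel_measurable M" "g \<in> borel_measurable M"
  unfolding rr_def by measurable

lemma R1: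
  fixes F :: "real \<Rightarrow> ennreal"
  assumes a: "0 \<le> a" "a \<le> 1" and [measurable]: "F \<in> borel_measurable borel"
  shows "(\<integral>\<^sup>+b. indicator {0..1} b * F (rr a b) \<partial>lborel) = (\<integral>\<^sup>+x. indicator {0..1} x * F x \<partial>lborel)"
proof -
  have split: "indicator {0..1} b * F (rr a b) =
     indicator {0..<1-a} b * F (1-a-b) + indicator {1-a..1} b * F (2-a-b)" for b
    using a by (auto simp: indicator_def rr_def)
  have i1: "(\<integral>\<^sup>+b. indicator {0..<1-a} b * F (1-a-b) \<partial>lborel) = (\<integral>\<^sup>+x. indicator {0<..1-a} x * F x \<partial>lborel)"
    using nn_integral_real_affine[of "\<lambda>x. indicator {0<..1-a} x * F x" "-1" "1-a"]
    by (auto simp: indicator_def intro!: nn_integral_cong)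
  have i2: "(\<integral>\<^sup>+b. indicator {1-a..1} b * F (2-a-b) \<partial>lborel) = (\<integral>\<^sup>+x. indicator {1-a..1} x * F x \<partial>lborel)"
    using nn_integral_real_affine[of "\<lambda>x. indicator {1-a..1} x * F x" "-1" "2-a"]
    by (auto simp: indicator_def intro!: nn_integral_cong)
  have "(\<integral>\<^sup>+b. indicator {0..1} b * F (rr a b) \<partial>lborel) =
     (\<integral>\<^sup>+b. indicator {0..<1-a} b * F (1-a-b) \<partial>lborel) + (\<integral>\<^sup>+b. indicator {1-a..1} b * F (2-a-b) \<partial>lborel)"
    unfolding split by (rule nn_integral_add) auto
  also have "\<dots> = (\<integral>\<^sup>+x. indicator {0<..1-a} x * F x + indicator {1-a..1} x * F x \<partial>lborel)"
    unfolding i1 i2 by (rule nn_integral_add[symmetric]) auto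
  also have "\<dots> = (\<integral>\<^sup>+x. indicator {0..1} x * F x \<partial>lborel)"
  proof (rule nn_integral_cong_AE)
    show "AE x in lborel. indicator {0<..1-a} x * F x + indicator {1-a..1} x * F x = indicator {0..1} x * F x"
      using AE_lborel_singleton[of 0] AE_lborel_singleton[of "1-a"]
    proof eventually_elim
      case (elim x) then show ?case using a by (auto simp: indicator_def)
    qed
  qed
  finally show ?thesis .
qed

lemma R2:
  fixes G :: "real \<Rightarrow> ennreal"
  assumes [measurable]: "G \<in> borel_measurable borel"
  shows "(\<Sum>k<3. \<integral>\<^sup>+x. indicator {0..1} x * G ((real k + x)/3) \<partial>lborel) = 3 * (\<integral>\<^sup>+y. indicator {0..1} y * G y \<partial>lborel)"
proof -
  have k: "(\<integral>\<^sup>+x. indicator {0..1} x * G ((real k + x)/3) \<partial>lborel) =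
     3 * (\<integral>\<^sup>+y. indicator {real k/3..(real k+1)/3} y * G y \<partial>lborel)" for k
  proof -
    have "(\<integral>\<^sup>+y. indicator {real k/3..(real k+1)/3} y * G y \<partial>lborel) =
      ennreal (1/3) * (\<integral>\<^sup>+x. indicator {real k/3..(real k+1)/3} (real k/3 + 1/3 * x) * G (real k/3 + 1/3 * x) \<partial>lborel)"
      using nn_integral_real_affine[of "\<lambda>y. indicator {real k/3..(real k+1)/3} y * G y" "1/3" "real k/3"] by simp
    also have "(\<lambda>x. indicator {real k/3..(real k+1)/3} (real k/3 + 1/3 * x) * G (real k/3 + 1/3 * x)) =
       (\<lambda>x. indicator {0..1} x * G ((real k + x)/3))"
      by (auto simp: indicator_def add_divide_distrib intro!: ext)
    finally have "3 * (\<integral>\<^sup>+y. indicator {real k/3..(real k+1)/3} y * G y \<partial>lborel) =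
        3 * ennreal (1/3) * (\<integral>\<^sup>+x. indicator {0..1} x * G ((real k + x)/3) \<partial>lborel)"
      by (simp add: mult.assoc)
    also have "3 * ennreal (1/3) = 1"
      by (simp flip: ennreal_numeral ennreal_mult)
    finally show ?thesis by simp
  qed
  have "(\<Sum>k<3. \<integral>\<^sup>+x. indicator {0..1} x * G ((real k + x)/3) \<partial>lborel)
     = 3 * (\<Sum>k<3. \<integral>\<^sup>+y. indicator {real k/3..(real k+1)/3} y * G y \<partial>lborel)"
    unfolding k by (simp add: sum_distrib_left)
  also have "(\<Sum>k<3. \<integral>\<^sup>+y. indicator {real k/3..(real k+1)/3} y * G y \<partial>lborel)
     = (\<integral>\<^sup>+y. (\<Sum>k<3. indicator {real k/3..(real k+1)/3} y * G y) \<partial>lborel)"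
    by (rule nn_integral_sum[symmetric]) auto
  also have "\<dots> = (\<integral>\<^sup>+y. indicator {0..1} y * G y \<partial>lborel)"
  proof (rule nn_integral_cong_AE)
    show "AE y in lborel. (\<Sum>k<3. indicator {real k/3..(real k+1)/3} y * G y) = indicator {0..1} y * G y"
      using AE_lborel_singleton[of "1/3"] AE_lborel_singleton[of "2/3"]
    proof eventually_elim
      case (elim y)
      have e: "(\<Sum>k<3. indicator {real k/3..(real k+1)/3} y * G y) =
        indicator {0..1/3} y * G y + indicator {1/3..2/3} y * G y + indicator {2/3..1} y * G y"
        by (simp only: numeral_3_eq_3 sum.lessThan_Suc lessThan_0 sum.empty) (simp add: add_ac)
      show ?case unfolding e using elim by (auto simp: indicator_def)
    qed
  qed
  finally show ?thesis .
qed

definition U :: "nat measure" where "U = uniform_count_measure {..<3}"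
definition M0 :: "((real \<times> real) \<times> nat) measure" where "M0 = mu2 \<Otimes>\<^sub>M U"
definition T :: "(real \<times> real) \<times> nat \<Rightarrow> real \<times> real \<times> real" where
  "T p = (fst (fst p), snd (fst p), (real (snd p) + rr (fst (fst p)) (snd (fst p))) / 3)"
definition cubeM :: "(real \<times> real \<times> real) measure" where "cubeM = restrict_space borel unit_cube"
definition piM where "piM = distr M0 cubeM T"

lemma sq_borel[measurable]: "unit_sq \<in> sets borel"
  unfolding unit_sq_def by (simp add: borel_prod[symmetric])
lemma cube_borel[measurable]: "unit_cube \<in> sets borel"
  unfolding unit_cube_def by (simp add: borel_prod[symmetric])

lemma sets_mu2[measurable_cong]: "sets mu2 = sets (restrict_space borel unit_sq)"
  unfolding mu2_def by (simp add: sets_restrict_space)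
lemma space_mu2: "space mu2 = unit_sq" unfolding mu2_def by (simp add: space_restrict_space)
lemma sets_U[measurable_cong]: "sets U = sets (count_space {..<3})" unfolding U_def by (rule sets_uniform_count_measure_count_space)
lemma space_U: "space U = {..<3}" unfolding U_def by (simp add: space_uniform_count_measure)

lemma emeasure_sq: "emeasure lborel unit_sq = 1"
proof -
  have "emeasure (lborel \<Otimes>\<^sub>M lborel) ({0..1::real} \<times> {0..1::real}) = 1"
    by (simp add: lborel.emeasure_pair_measure_Times)
  then show ?thesis by (simp add: lborel_prod unit_sq_def)
qed

lemma prob_mu2: "prob_space mu2"
  by (rule prob_spaceI) (simp add: space_mu2 mu2_def emeasure_restrict_space emeasure_sq)
lemma prob_U: "prob_space U" unfolding U_def by (rule prob_space_uniform_count_measure) (auto simp: lessThan_empty_iff)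
lemma prob_M0: "prob_space M0" unfolding M0_def
  by (intro prob_space_pair prob_mu2 prob_U)

lemma rr_range: "0 \<le> a \<Longrightarrow> a \<le> 1 \<Longrightarrow> 0 \<le> b \<Longrightarrow> b \<le> 1 \<Longrightarrow> 0 \<le> rr a b \<and> rr a b \<le> 1"
  unfolding rr_def by auto

lemma T_range: "p \<in> space M0 \<Longrightarrow> T p \<in> unit_cube"
proof -
  assume p: "p \<in> space M0"
  obtain a b k where pe: "p = ((a,b),k)" by (metis prod.collapse)
  with p have ab: "0 \<le> a" "a \<le> 1" "0 \<le> b" "b \<le> 1" "k < 3"
    by (auto simp: M0_def space_pair_measure space_mu2 space_U unit_sq_def)
  then have "real k \<le> 2" by simp
  with rr_range[OF ab(1-4)] ab show ?thesis by (auto simp: pe T_def unit_cube_def)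
qed

lemma m_fst[measurable]: "(\<lambda>x. fst (fst x)) \<in> borel_measurable M0"
proof -
  have "fst \<in> measurable M0 mu2" unfolding M0_def by simp
  moreover have "fst \<in> borel_measurable mu2"
    unfolding mu2_def by (intro measurable_restrict_space1)
      (simp add: measurable_cong_sets[OF sets_lborel refl] borel_measurable_continuous_onI[OF continuous_on_fst[OF continuous_on_id]])
  ultimately show ?thesis by (rule measurable_compose)
qed
lemma m_snd[measurable]: "(\<lambda>x. snd (fst x)) \<in> borel_measurable M0"
proof -
  have "fst \<in> measurable M0 mu2" unfolding M0_def by simp
  moreover have "snd \<in> borel_measurable mu2"
    unfolding mu2_def by (intro measurable_restrict_space1)
      (simp add: measurable_cong_sets[OF sets_lborel refl] borel_measurable_continuous_onI[OF continuous_on_snd[OF continuous_on_id]])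
  ultimately show ?thesis by (rule measurable_compose)
qed
lemma m_k[measurable]: "(\<lambda>x. real (snd x)) \<in> borel_measurable M0"
proof -
  have "snd \<in> measurable M0 U" unfolding M0_def by simp
  moreover have "real \<in> borel_measurable U"
    by (simp add: measurable_cong_sets[OF sets_U refl])
  ultimately show ?thesis by (rule measurable_compose)
qed

lemma T_meas_borel: "T \<in> borel_measurable M0"
  unfolding T_def by measurable

lemma T_meas: "T \<in> measurable M0 cubeM"
  unfolding cubeM_def by (intro measurable_restrict_space2 T_meas_borel Pi_I T_range)

lemma pi_prob: "prob_space piM"
  unfolding piM_def by (intro prob_space.prob_space_distr prob_M0 T_meas)

lemma sets_piM[measurable_cong]: "sets piM = sets (restrict_space borel unit_cube)"
  unfolding piM_def cubeM_def by simp
lemma space_piM: "space piM = unit_cube"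
  unfolding piM_def cubeM_def by (simp add: space_restrict_space)

lemma PI:
  fixes H :: "real \<times> real \<times> real \<Rightarrow> ennreal"
  assumes H[measurable]: "H \<in> borel_measurable borel"
  shows "(\<integral>\<^sup>+p. H p \<partial>piM) = (\<integral>\<^sup>+q. (\<Sum>k<3. ennreal (1/3) * H (fst q, snd q, (real k + rr (fst q) (snd q))/3)) * indicator unit_sq q \<partial>lborel)"
proof -
  interpret mu2: prob_space mu2 by (rule prob_mu2)
  interpret U: prob_space U by (rule prob_U)
  interpret P: pair_prob_space mu2 U ..
  have Hc: "H \<in> borel_measurable cubeM" unfolding cubeM_def by (intro measurable_restrict_space1 H)
  have "(\<integral>\<^sup>+p. H p \<partial>piM) = (\<integral>\<^sup>+x. H (T x) \<partial>M0)"
    unfolding piM_def by (rule nn_integral_distr[OF T_meas]) (use Hc in simp)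
  also have "\<dots> = (\<integral>\<^sup>+q. (\<integral>\<^sup>+k. H (T (q,k)) \<partial>U) \<partial>mu2)"
    unfolding M0_def
    by (rule U.nn_integral_fst[of "\<lambda>x. H (T x)" mu2, symmetric]) (use measurable_comp[OF T_meas Hc] in \<open>simp add: M0_def comp_def\<close>)
  also have "\<dots> = (\<integral>\<^sup>+q. (\<Sum>k<3. ennreal (1/3) * H (fst q, snd q, (real k + rr (fst q) (snd q))/3)) \<partial>mu2)"
    by (intro nn_integral_cong) (simp add: U_def uniform_count_measure_def nn_integral_point_measure_finite T_def)
  also have "\<dots> = (\<integral>\<^sup>+q. (\<Sum>k<3. ennreal (1/3) * H (fst q, snd q, (real k + rr (fst q) (snd q))/3)) * indicator unit_sq q \<partial>lborel)"
    unfolding mu2_def by (rule nn_integral_restrict_space) simp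
  finally show ?thesis .
qed

lemma fst_b[measurable]: "(fst :: real \<times> real \<Rightarrow> real) \<in> borel_measurable borel"
  by (intro borel_measurable_continuous_onI continuous_on_fst continuous_on_id)
lemma snd_b[measurable]: "(snd :: real \<times> real \<Rightarrow> real) \<in> borel_measurable borel"
  by (intro borel_measurable_continuous_onI continuous_on_snd continuous_on_id)
lemma ind_sq[measurable]: "(indicator unit_sq :: real \<times> real \<Rightarrow> ennreal) \<in> borel_measurable borel"
  by (rule borel_measurable_indicator) (rule sq_borel)

lemma third: "3 * ennreal (1/3) = 1"
  by (simp flip: ennreal_numeral ennreal_mult)

lemma Rsq:
  fixes G :: "real \<Rightarrow> ennreal"
  assumes [measurable]: "G \<in> borel_measurable borel"
  shows "(\<integral>\<^sup>+b. (\<Sum>k<3. ennreal (1/3) * G ((real k + rr a b)/3)) * indicator unit_sq (a,b) \<partial>lborel)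
       = (\<integral>\<^sup>+y. G y * indicator unit_sq (a,y) \<partial>lborel)"
proof (cases "0 \<le> a \<and> a \<le> 1")
  case False
  then have "\<And>y. indicator unit_sq (a,y) = (0::ennreal)" by (auto simp: unit_sq_def indicator_def)
  then show ?thesis by simp
next
  case True
  have e: "(\<Sum>k<3. ennreal (1/3) * G ((real k + rr a b)/3)) * indicator unit_sq (a,b)
     = (\<Sum>k<3. ennreal (1/3) * (indicator {0..1} b * G ((real k + rr a b)/3)))" for b
    using True by (auto simp: unit_sq_def indicator_def)
  have "(\<integral>\<^sup>+b. (\<Sum>k<3. ennreal (1/3) * G ((real k + rr a b)/3)) * indicator unit_sq (a,b) \<partial>lborel)
     = (\<Sum>k<3. \<integral>\<^sup>+b. ennreal (1/3) * (indicator {0..1} b * G ((real k + rr a b)/3)) \<partial>lborel)"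
    unfolding e by (rule nn_integral_sum) auto
  also have "\<dots> = (\<Sum>k<3. ennreal (1/3) * \<integral>\<^sup>+b. indicator {0..1} b * G ((real k + rr a b)/3) \<partial>lborel)"
    by (intro sum.cong refl nn_integral_cmult) auto
  also have "\<dots> = (\<Sum>k<3. ennreal (1/3) * \<integral>\<^sup>+x. indicator {0..1} x * G ((real k + x)/3) \<partial>lborel)"
    using True by (intro sum.cong refl arg_cong2[where f="(*)"] R1) auto
  also have "\<dots> = ennreal (1/3) * (3 * \<integral>\<^sup>+y. indicator {0..1} y * G y \<partial>lborel)"
    by (simp add: sum_distrib_left[symmetric] R2)
  also have "\<dots> = (\<integral>\<^sup>+y. indicator {0..1} y * G y \<partial>lborel)"
    by (simp add: mult.assoc[symmetric] mult.commute[of "ennreal (1/3)"] third)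
  also have "\<dots> = (\<integral>\<^sup>+y. G y * indicator unit_sq (a,y) \<partial>lborel)"
    using True by (intro nn_integral_cong) (auto simp: unit_sq_def indicator_def)
  finally show ?thesis .
qed

lemma rr_sym: "rr a b = rr b a" unfolding rr_def by (simp add: add.commute)

lemma pr12_eq: "pr12 = (\<lambda>p. (fst p, fst (snd p)))" by (auto simp: pr12_def split: prod.splits)
lemma pr13_eq: "pr13 = (\<lambda>p. (fst p, snd (snd p)))" by (auto simp: pr13_def split: prod.splits)
lemma pr23_eq: "pr23 = (\<lambda>p. (fst (snd p), snd (snd p)))" by (auto simp: pr23_def split: prod.splits)

lemma pr_borel[measurable]: "pr12 \<in> borel_measurable borel" "pr13 \<in> borel_measurable borel" "pr23 \<in> borel_measurable borel"
  unfolding pr12_eq pr13_eq pr23_eq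
  by (intro borel_measurable_continuous_onI continuous_intros)+

lemma pr_meas: "pr12 \<in> measurable piM mu2" "pr13 \<in> measurable piM mu2" "pr23 \<in> measurable piM mu2"
  unfolding measurable_cong_sets[OF sets_piM sets_mu2]
  by (rule measurable_restrict_space2, force simp: space_restrict_space unit_cube_def unit_sq_def pr12_def pr13_def pr23_def,
      rule measurable_restrict_space1, rule pr_borel)+

lemma sets_mu2_iff: "Y \<in> sets mu2 \<longleftrightarrow> Y \<in> sets borel \<and> Y \<subseteq> unit_sq"
  unfolding sets_mu2 by (subst sets_restrict_space_iff) auto

lemma emeasure_mu2: "Y \<in> sets mu2 \<Longrightarrow> emeasure mu2 Y = (\<integral>\<^sup>+q. indicator Y q * indicator unit_sq q \<partial>lborel)"
proof -
  assume "Y \<in> sets mu2"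
  then have Y: "Y \<in> sets borel" "Y \<subseteq> unit_sq" by (auto simp: sets_mu2_iff)
  then have "emeasure mu2 Y = emeasure lborel Y" unfolding mu2_def
    by (subst emeasure_restrict_space) auto
  also have "\<dots> = (\<integral>\<^sup>+q. indicator Y q \<partial>lborel)" using Y by simp
  also have "\<dots> = (\<integral>\<^sup>+q. indicator Y q * indicator unit_sq q \<partial>lborel)"
    using Y by (intro nn_integral_cong) (auto simp: indicator_def)
  finally show ?thesis .
qed

lemma emeasure_pi_pr:
  fixes pr :: "real \<times> real \<times> real \<Rightarrow> real \<times> real"
  assumes pm: "pr \<in> measurable piM mu2" and pb[measurable]: "pr \<in> borel_measurable borel"
    and Y: "Y \<in> sets mu2"
  shows "emeasure (distr piM mu2 pr) Y = (\<integral>\<^sup>+q. (\<Sum>k<3. ennreal (1/3) * indicator Y (pr (fst q, snd q, (real k + rr (fst q) (snd q))/3))) * indicator unit_sq q \<partial>lborel)"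
proof -
  have Yb[measurable]: "Y \<in> sets borel" using Y by (auto simp: sets_mu2_iff)
  have "emeasure (distr piM mu2 pr) Y = emeasure piM (pr -` Y \<inter> space piM)"
    by (rule emeasure_distr[OF pm Y])
  also have "\<dots> = (\<integral>\<^sup>+p. indicator (pr -` Y \<inter> unit_cube) p \<partial>piM)"
    using measurable_sets[OF pm Y] by (simp add: space_piM)
  also have "\<dots> = (\<integral>\<^sup>+q. (\<Sum>k<3. ennreal (1/3) * indicator (pr -` Y \<inter> unit_cube) (fst q, snd q, (real k + rr (fst q) (snd q))/3)) * indicator unit_sq q \<partial>lborel)"
    by (rule PI) measurable
  also have "\<dots> = (\<integral>\<^sup>+q. (\<Sum>k<3. ennreal (1/3) * indicator Y (pr (fst q, snd q, (real k + rr (fst q) (snd q))/3))) * indicator unit_sq q \<partial>lborel)"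
  proof (intro nn_integral_cong)
    fix q :: "real \<times> real"
    show "(\<Sum>k<3. ennreal (1/3) * indicator (pr -` Y \<inter> unit_cube) (fst q, snd q, (real k + rr (fst q) (snd q))/3)) * indicator unit_sq q
       = (\<Sum>k<3. ennreal (1/3) * indicator Y (pr (fst q, snd q, (real k + rr (fst q) (snd q))/3))) * indicator unit_sq q"
    proof (cases "q \<in> unit_sq")
      case True
      have "(fst q, snd q, (real k + rr (fst q) (snd q))/3) \<in> unit_cube" if "k < 3" for k
        using T_range[of "(q,k)"] True that
        by (auto simp: T_def M0_def space_pair_measure space_mu2 space_U)
      then show ?thesis by (intro arg_cong2[where f="(*)"] sum.cong refl) (auto simp: indicator_def)
    qed simp
  qed
  finally show ?thesis .
qed

lemma fubini_fst:
  fixes f :: "real \<times> real \<Rightarrow> ennreal"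
  assumes "f \<in> borel_measurable borel"
  shows "(\<integral>\<^sup>+q. f q \<partial>lborel) = (\<integral>\<^sup>+x. \<integral>\<^sup>+y. f (x,y) \<partial>lborel \<partial>lborel)"
  using lborel.nn_integral_fst[of f lborel] assms by (simp add: lborel_prod)

lemma fubini_snd:
  fixes f :: "real \<times> real \<Rightarrow> ennreal"
  assumes "f \<in> borel_measurable borel"
  shows "(\<integral>\<^sup>+q. f q \<partial>lborel) = (\<integral>\<^sup>+y. \<integral>\<^sup>+x. f (x,y) \<partial>lborel \<partial>lborel)"
  using lborel_pair.nn_integral_snd[of f] assms by (simp add: lborel_prod)

lemma marg13: "distr piM mu2 pr13 = mu2"
proof (rule measure_eqI)
  show "sets (distr piM mu2 pr13) = sets mu2" by simp
  fix Y assume "Y \<in> sets (distr piM mu2 pr13)"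
  then have Y: "Y \<in> sets mu2" by simp
  then have [measurable]: "Y \<in> sets borel" by (simp add: sets_mu2_iff)
  have "emeasure (distr piM mu2 pr13) Y = (\<integral>\<^sup>+q. (\<Sum>k<3. ennreal (1/3) * indicator Y (fst q, (real k + rr (fst q) (snd q))/3)) * indicator unit_sq q \<partial>lborel)"
    unfolding emeasure_pi_pr[OF pr_meas(2) pr_borel(2) Y] by (simp add: pr13_def)
  also have "\<dots> = (\<integral>\<^sup>+a. \<integral>\<^sup>+b. (\<Sum>k<3. ennreal (1/3) * indicator Y (a, (real k + rr a b)/3)) * indicator unit_sq (a,b) \<partial>lborel \<partial>lborel)"
  proof -
    have m: "(\<lambda>q. (\<Sum>k<3. ennreal (1/3) * indicator Y (fst q, (real k + rr (fst q) (snd q))/3)) * indicator unit_sq q) \<in> borel_measurable borel"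
      by measurable
    show ?thesis using fubini_fst[OF m] by simp
  qed
  also have "\<dots> = (\<integral>\<^sup>+a. \<integral>\<^sup>+y. indicator Y (a,y) * indicator unit_sq (a,y) \<partial>lborel \<partial>lborel)"
    by (intro nn_integral_cong Rsq) measurable
  also have "\<dots> = (\<integral>\<^sup>+q. indicator Y q * indicator unit_sq q \<partial>lborel)"
  proof -
    have m: "(\<lambda>q. indicator Y q * indicator unit_sq q :: ennreal) \<in> borel_measurable borel"
      by measurable
    show ?thesis using fubini_fst[OF m] by simp
  qed
  also have "\<dots> = emeasure mu2 Y" by (rule emeasure_mu2[OF Y, symmetric])
  finally show "emeasure (distr piM mu2 pr13) Y = emeasure mu2 Y" .
qed

lemma marg23: "distr piM mu2 pr23 = mu2"
proof (rule measure_eqI)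
  show "sets (distr piM mu2 pr23) = sets mu2" by simp
  fix Y assume "Y \<in> sets (distr piM mu2 pr23)"
  then have Y: "Y \<in> sets mu2" by simp
  then have [measurable]: "Y \<in> sets borel" by (simp add: sets_mu2_iff)
  have "emeasure (distr piM mu2 pr23) Y = (\<integral>\<^sup>+q. (\<Sum>k<3. ennreal (1/3) * indicator Y (snd q, (real k + rr (fst q) (snd q))/3)) * indicator unit_sq q \<partial>lborel)"
    unfolding emeasure_pi_pr[OF pr_meas(3) pr_borel(3) Y] by (simp add: pr23_def)
  also have "\<dots> = (\<integral>\<^sup>+b. \<integral>\<^sup>+a. (\<Sum>k<3. ennreal (1/3) * indicator Y (b, (real k + rr a b)/3)) * indicator unit_sq (a,b) \<partial>lborel \<partial>lborel)"
  proof -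
    have m: "(\<lambda>q. (\<Sum>k<3. ennreal (1/3) * indicator Y (snd q, (real k + rr (fst q) (snd q))/3)) * indicator unit_sq q) \<in> borel_measurable borel"
      by measurable
    show ?thesis using fubini_snd[OF m] by simp
  qed
  also have "\<dots> = (\<integral>\<^sup>+b. \<integral>\<^sup>+a. (\<Sum>k<3. ennreal (1/3) * indicator Y (b, (real k + rr b a)/3)) * indicator unit_sq (b,a) \<partial>lborel \<partial>lborel)"
    by (intro nn_integral_cong arg_cong2[where f="(*)"] sum.cong refl)
       (auto simp: rr_sym unit_sq_def indicator_def)
  also have "\<dots> = (\<integral>\<^sup>+b. \<integral>\<^sup>+y. indicator Y (b,y) * indicator unit_sq (b,y) \<partial>lborel \<partial>lborel)"
    by (intro nn_integral_cong Rsq) measurable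
  also have "\<dots> = (\<integral>\<^sup>+q. indicator Y q * indicator unit_sq q \<partial>lborel)"
  proof -
    have m: "(\<lambda>q. indicator Y q * indicator unit_sq q :: ennreal) \<in> borel_measurable borel"
      by measurable
    show ?thesis using fubini_fst[OF m] by simp
  qed
  also have "\<dots> = emeasure mu2 Y" by (rule emeasure_mu2[OF Y, symmetric])
  finally show "emeasure (distr piM mu2 pr23) Y = emeasure mu2 Y" .
qed

lemma marg12: "distr piM mu2 pr12 = mu2"
proof -
  interpret U: prob_space U by (rule prob_U)
  have "distr piM mu2 pr12 = distr M0 mu2 (pr12 \<circ> T)"
    unfolding piM_def by (rule distr_distr) (use pr_meas(1) T_meas in \<open>auto simp: piM_def\<close>)
  also have "\<dots> = distr M0 mu2 fst"
    by (rule distr_cong) (auto simp: T_def pr12_def)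
  also have "\<dots> = mu2" unfolding M0_def by (rule U.distr_pair_fst)
  finally show ?thesis .
qed

lemma ineq: "0 \<le> x1 \<Longrightarrow> x1 \<le> 1 \<Longrightarrow> 0 \<le> x2 \<Longrightarrow> x2 \<le> 1 \<Longrightarrow> 0 \<le> x3 \<Longrightarrow> x3 \<le> 1 \<Longrightarrow>
   f12 x1 x2 + f13 x1 x3 + f23 x2 x3 \<le> cost (x1, x2, x3)"
  by (auto simp: f12_def f13_def f23_def cost_def)

lemma supp_eq:
  assumes "0 \<le> x1" "x1 \<le> 1" "0 \<le> x2" "x2 \<le> 1" "0 \<le> x3" "x3 \<le> 1"
    and "x1 + x2 + 3 * x3 \<in> \<int>" and "(x1, x2) \<noteq> (0, 0)"
  shows "cost (x1, x2, x3) = f13 x1 x3 + f23 x2 x3"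
proof -
  obtain n where n: "x1 + x2 + 3 * x3 = of_int n" using assms(7) by (auto elim: Ints_cases)
  have pos: "x1 + x2 > 0" using assms by auto
  show ?thesis
  proof (cases "x3 < 2/3")
    case True
    then have "of_int n < (4::real)" using n assms by linarith
    then have "n \<le> 3" by linarith
    then have "of_int n \<le> (3::real)" by linarith
    then show ?thesis using True n by (simp add: cost_def f13_def f23_def)
  next
    case False
    then have "of_int n > (2::real)" using n assms pos by linarith
    then have "n \<ge> 3" by linarith
    then have "of_int n \<ge> (3::real)" by linarith
    then show ?thesis using False n by (simp add: cost_def f13_def f23_def)
  qed
qed

lemma Ints_borel[measurable]: "(\<int> :: real set) \<in> sets borel"
  by (rule sets.countable) (auto simp: countable_int)

lemma cost_eq: "cost = (\<lambda>p. max 0 (fst p + fst (snd p) + 3 * snd (snd p) - 3))"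
  by (auto simp: cost_def split: prod.splits)

lemma fst3_b[measurable]: "(fst :: real \<times> real \<times> real \<Rightarrow> real) \<in> borel_measurable borel"
  by (intro borel_measurable_continuous_onI continuous_on_fst continuous_on_id)
lemma snd3_b[measurable]: "(\<lambda>p::real \<times> real \<times> real. fst (snd p)) \<in> borel_measurable borel"
  by (intro borel_measurable_continuous_onI continuous_intros)
lemma thd3_b[measurable]: "(\<lambda>p::real \<times> real \<times> real. snd (snd p)) \<in> borel_measurable borel"
  by (intro borel_measurable_continuous_onI continuous_intros)

lemma cost_borel[measurable]: "cost \<in> borel_measurable borel"
  unfolding cost_eq by (intro borel_measurable_continuous_onI continuous_intros)

lemma AE_int: "AE p in piM. fst p + fst (snd p) + 3 * snd (snd p) \<in> \<int>"
proof -
  show ?thesis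
    unfolding piM_def
  proof (subst AE_distr_iff[OF T_meas])
    show "{x \<in> space cubeM. fst x + fst (snd x) + 3 * snd (snd x) \<in> \<int>} \<in> sets cubeM"
    proof -
      have "{x \<in> unit_cube. fst x + fst (snd x) + 3 * snd (snd x) \<in> \<int>} \<in> sets borel" by measurable
      then show ?thesis unfolding cubeM_def by (subst sets_restrict_space_iff) (auto simp: space_restrict_space)
    qed
    show "AE x in M0. fst (T x) + fst (snd (T x)) + 3 * snd (snd (T x)) \<in> \<int>"
    proof (rule AE_I2)
      fix x assume "x \<in> space M0"
      have "fst (T x) + fst (snd (T x)) + 3 * snd (snd (T x)) =
        (if fst (fst x) + snd (fst x) < 1 then of_nat (snd x + 1) else of_nat (snd x + 2))"
        by (simp add: T_def rr_def field_simps)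
      then show "fst (T x) + fst (snd (T x)) + 3 * snd (snd (T x)) \<in> \<int>" by simp
    qed
  qed
qed

lemma AE_mu2_ne: "AE q in mu2. q \<noteq> (0,0)"
  unfolding mu2_def by (subst AE_restrict_space_iff) (auto intro: AE_mp[OF AE_lborel_singleton[of "(0,0)"]])

lemma AE_ne: "AE p in piM. pr12 p \<noteq> (0,0)"
proof -
  have "AE q in distr piM mu2 pr12. q \<noteq> (0,0)" unfolding marg12 by (rule AE_mu2_ne)
  then show ?thesis by (rule AE_distrD[OF pr_meas(1)])
qed

lemma coupling_pi: "coupling piM"
  unfolding coupling_def using pi_prob sets_piM marg12 marg13 marg23 by simp

lemma pr_meas_gen:
  assumes "sets \<nu> = sets (restrict_space borel unit_cube)"
  shows "pr12 \<in> measurable \<nu> mu2" "pr13 \<in> measurable \<nu> mu2" "pr23 \<in> measurable \<nu> mu2"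
  using pr_meas unfolding measurable_cong_sets[OF sets_piM refl] measurable_cong_sets[OF assms refl] by auto

lemma transfer:
  fixes h :: "real \<times> real \<Rightarrow> real"
  assumes pm: "pr \<in> measurable \<nu> mu2" and marg: "distr \<nu> mu2 pr = mu2"
    and hm: "h \<in> borel_measurable mu2" and hi: "integrable mu2 h"
  shows "integrable \<nu> (\<lambda>p. h (pr p))" "(\<integral>p. h (pr p) \<partial>\<nu>) = (\<integral>q. h q \<partial>mu2)"
proof -
  show "integrable \<nu> (\<lambda>p. h (pr p))"
    using integrable_distr_eq[OF pm hm] hi by (simp add: marg)
  show "(\<integral>p. h (pr p) \<partial>\<nu>) = (\<integral>q. h q \<partial>mu2)"
    using integral_distr[OF pm hm] by (simp add: marg)
qed

definition F13 :: "real \<times> real \<Rightarrow> real" where "F13 q = f13 (fst q) (snd q)"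
definition F23 :: "real \<times> real \<Rightarrow> real" where "F23 q = f23 (fst q) (snd q)"

lemma F_borel[measurable]: "F13 \<in> borel_measurable borel" "F23 \<in> borel_measurable borel"
  unfolding F13_def F23_def f13_def f23_def by measurable

lemma F_mu2: "F13 \<in> borel_measurable mu2" "F23 \<in> borel_measurable mu2"
  unfolding mu2_def by (intro measurable_restrict_space1, simp add: measurable_cong_sets[OF sets_lborel refl])+

lemma F_int: "integrable mu2 F13" "integrable mu2 F23"
proof -
  interpret prob_space mu2 by (rule prob_mu2)
  show "integrable mu2 F13"
    by (rule integrable_const_bound[where B=2]) (auto intro!: AE_I2 F_mu2 simp: space_mu2 unit_sq_def F13_def f13_def)
  show "integrable mu2 F23"
    by (rule integrable_const_bound[where B=2]) (auto intro!: AE_I2 F_mu2 simp: space_mu2 unit_sq_def F23_def f23_def)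
qed

lemma cost_int:
  assumes "coupling \<nu>" shows "integrable \<nu> cost"
proof -
  from assms have p: "prob_space \<nu>" and s: "sets \<nu> = sets (restrict_space borel unit_cube)"
    by (auto simp: coupling_def)
  interpret prob_space \<nu> by (rule p)
  have sp: "space \<nu> = unit_cube" using sets_eq_imp_space_eq[OF s] by (simp add: space_restrict_space)
  have cm: "cost \<in> borel_measurable \<nu>"
    unfolding measurable_cong_sets[OF s refl] by (intro measurable_restrict_space1 cost_borel)
  show ?thesis
    by (rule integrable_const_bound[where B=3]) (auto intro!: AE_I2 cm simp: sp unit_cube_def cost_def)
qed

lemma lower:
  assumes c: "coupling \<nu>"
  shows "(\<integral>q. F13 q \<partial>mu2) + (\<integral>q. F23 q \<partial>mu2) \<le> (\<integral>p. cost p \<partial>\<nu>)"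
proof -
  from c have s: "sets \<nu> = sets (restrict_space borel unit_cube)"
    and m13: "distr \<nu> mu2 pr13 = mu2" and m23: "distr \<nu> mu2 pr23 = mu2"
    by (auto simp: coupling_def)
  have sp: "space \<nu> = unit_cube" using sets_eq_imp_space_eq[OF s] by (simp add: space_restrict_space)
  note t13 = transfer[OF pr_meas_gen(2)[OF s] m13 F_mu2(1) F_int(1)]
  note t23 = transfer[OF pr_meas_gen(3)[OF s] m23 F_mu2(2) F_int(2)]
  have "(\<integral>q. F13 q \<partial>mu2) + (\<integral>q. F23 q \<partial>mu2) = (\<integral>p. F13 (pr13 p) + F23 (pr23 p) \<partial>\<nu>)"
    using t13 t23 by simp
  also have "\<dots> \<le> (\<integral>p. cost p \<partial>\<nu>)"
  proof (rule integral_mono)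
    show "integrable \<nu> (\<lambda>p. F13 (pr13 p) + F23 (pr23 p))" using t13 t23 by simp
    show "integrable \<nu> cost" by (rule cost_int[OF c])
    fix p assume "p \<in> space \<nu>"
    then show "F13 (pr13 p) + F23 (pr23 p) \<le> cost p"
      using ineq[of "fst p" "fst (snd p)" "snd (snd p)"]
      by (auto simp: sp unit_cube_def F13_def F23_def pr13_def pr23_def f12_def split: prod.splits)
  qed
  finally show ?thesis .
qed

lemma pi_cost: "(\<integral>p. cost p \<partial>piM) = (\<integral>q. F13 q \<partial>mu2) + (\<integral>q. F23 q \<partial>mu2)"
proof -
  note t13 = transfer[OF pr_meas(2) marg13 F_mu2(1) F_int(1)]
  note t23 = transfer[OF pr_meas(3) marg23 F_mu2(2) F_int(2)]
  have "(\<integral>p. cost p \<partial>piM) = (\<integral>p. F13 (pr13 p) + F23 (pr23 p) \<partial>piM)"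
  proof (rule integral_cong_AE)
    show "cost \<in> borel_measurable piM"
      unfolding measurable_cong_sets[OF sets_piM refl] by (intro measurable_restrict_space1 cost_borel)
    show "(\<lambda>p. F13 (pr13 p) + F23 (pr23 p)) \<in> borel_measurable piM"
      using t13 t23 by (intro borel_measurable_add) (auto dest: borel_measurable_integrable)
    show "AE p in piM. cost p = F13 (pr13 p) + F23 (pr23 p)"
      using AE_int AE_ne AE_space
    proof (eventually_elim)
      case (elim p)
      obtain x1 x2 x3 where pe: "p = (x1, x2, x3)" by (metis prod.collapse)
      from elim show ?case
        using supp_eq[of x1 x2 x3]
        by (auto simp: pe space_piM unit_cube_def F13_def F23_def pr12_def pr13_def pr23_def)
    qed
  qed
  also have "\<dots> = (\<integral>q. F13 q \<partial>mu2) + (\<integral>q. F23 q \<partial>mu2)"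
    using t13 t23 by simp
  finally show ?thesis .
qed

lemma sq_lborel: "unit_sq \<inter> space lborel \<in> sets lborel" by simp
lemma sq_leb: "unit_sq \<inter> space lebesgue \<in> sets lebesgue" by simp

lemma BL:
  fixes F :: "real \<times> real \<Rightarrow> real"
  assumes Fm[measurable]: "F \<in> borel_measurable borel" and Fi: "integrable mu2 F"
  shows "integrable mu2L F" "integral\<^sup>L mu2L F = integral\<^sup>L mu2 F"
proof -
  have m: "(\<lambda>x. indicator unit_sq x *\<^sub>R F x) \<in> borel_measurable lborel" by measurable
  have i1: "integrable lborel (\<lambda>x. indicator unit_sq x *\<^sub>R F x)"
    using Fi unfolding mu2_def integrable_restrict_space[OF sq_lborel] .
  then have "integrable lebesgue (\<lambda>x. indicator unit_sq x *\<^sub>R F x)"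
    using integrable_completion[OF m] by simp
  then show "integrable mu2L F"
    unfolding mu2L_def integrable_restrict_space[OF sq_leb] .
  show "integral\<^sup>L mu2L F = integral\<^sup>L mu2 F"
    unfolding mu2L_def mu2_def integral_restrict_space[OF sq_leb] integral_restrict_space[OF sq_lborel]
    by (rule integral_completion[OF m])
qed

lemma L1:
  fixes g :: "real \<times> real \<Rightarrow> real"
  assumes gi: "integrable mu2L g"
  shows "\<exists>h. h \<in> borel_measurable borel \<and> integrable mu2 h \<and> (AE q in mu2. g q = h q)
              \<and> integral\<^sup>L mu2L g = integral\<^sup>L mu2 h"
proof -
  define G where "G = (\<lambda>x. indicator unit_sq x *\<^sub>R g x)"
  have Gi: "integrable lebesgue G"
    using gi unfolding mu2L_def integrable_restrict_space[OF sq_leb] G_def .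
  then have "G \<in> borel_measurable (completion lborel)" by (rule borel_measurable_integrable)
  then obtain h0 where h0: "h0 \<in> borel_measurable lborel" "AE x in lborel. G x = h0 x"
    using completion_ex_borel_measurable_real by blast
  define h where "h = (\<lambda>x. indicator unit_sq x *\<^sub>R h0 x)"
  have h0b[measurable]: "h0 \<in> borel_measurable borel"
    using h0(1) by (simp add: measurable_cong_sets[OF sets_lborel refl])
  have hb[measurable]: "h \<in> borel_measurable borel" unfolding h_def by measurable
  have hl: "h \<in> borel_measurable lborel" by simp
  have AEh: "AE x in lborel. G x = h x"
    using h0(2) by eventually_elim (auto simp: G_def h_def indicator_def)
  have Gh: "AE x in lebesgue. G x = h x" by (rule AE_completion[OF AEh])
  have hleb: "integrable lebesgue h"
    by (rule integrable_cong_AE_imp[OF Gi measurable_completion[OF hl] Gh])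
  have hi: "integrable lborel h" using hleb integrable_completion[OF hl] by simp
  have hh: "(\<lambda>x. indicator unit_sq x *\<^sub>R h x) = h" by (auto simp: h_def indicator_def)
  have "integrable mu2 h"
    unfolding mu2_def integrable_restrict_space[OF sq_lborel] hh by (rule hi)
  moreover have "AE q in mu2. g q = h q"
    unfolding mu2_def AE_restrict_space_iff[OF sq_lborel]
    using AEh by eventually_elim (auto simp: G_def)
  moreover have "integral\<^sup>L mu2L g = integral\<^sup>L mu2 h"
  proof -
    have "integral\<^sup>L mu2L g = integral\<^sup>L lebesgue G"
      unfolding mu2L_def integral_restrict_space[OF sq_leb] G_def ..
    also have "\<dots> = integral\<^sup>L lebesgue h"
      by (rule integral_cong_AE) (use Gi hl Gh in \<open>auto intro: measurable_completion borel_measurable_integrable\<close>)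
    also have "\<dots> = integral\<^sup>L lborel h" by (rule integral_completion[OF hl])
    also have "\<dots> = integral\<^sup>L mu2 h"
      unfolding mu2_def integral_restrict_space[OF sq_lborel] hh ..
    finally show ?thesis .
  qed
  ultimately show ?thesis using hb by blast
qed

theorem mainTheorem19:
  shows "(\<forall>x1\<in>{0..1}. \<forall>x2\<in>{0..1}. \<forall>x3\<in>{0..1}.
            f12 x1 x2 + f13 x1 x3 + f23 x2 x3 \<le> cost (x1, x2, x3))
    \<and> integrable mu2L (\<lambda>(x, y). f12 x y)
    \<and> integrable mu2L (\<lambda>(x, y). f13 x y)
    \<and> integrable mu2L (\<lambda>(x, y). f23 x y)
    \<and> (\<forall>g12 g13 g23 :: real \<Rightarrow> real \<Rightarrow> real.
          integrable mu2L (\<lambda>(x, y). g12 x y) \<and> integrable mu2L (\<lambda>(x, y). g13 x y)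
          \<and> integrable mu2L (\<lambda>(x, y). g23 x y)
          \<and> (\<forall>x1\<in>{0..1}. \<forall>x2\<in>{0..1}. \<forall>x3\<in>{0..1}.
                g12 x1 x2 + g13 x1 x3 + g23 x2 x3 \<le> cost (x1, x2, x3))
          \<longrightarrow> (\<integral>p. g12 (fst p) (snd p) \<partial>mu2L) + (\<integral>p. g13 (fst p) (snd p) \<partial>mu2L)
                + (\<integral>p. g23 (fst p) (snd p) \<partial>mu2L)
              \<le> (\<integral>p. f12 (fst p) (snd p) \<partial>mu2L) + (\<integral>p. f13 (fst p) (snd p) \<partial>mu2L)
                + (\<integral>p. f23 (fst p) (snd p) \<partial>mu2L))
    \<and> (\<exists>\<pi>. coupling \<pi>
          \<and> (AE p in \<pi>. (case p of (x1, x2, x3) \<Rightarrow> x1 + x2 + 3 * x3 \<in> \<int>))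
          \<and> (\<forall>\<pi>'. coupling \<pi>' \<longrightarrow> (\<integral>p. cost p \<partial>\<pi>) \<le> (\<integral>p. cost p \<partial>\<pi>')))"
proof -
  have P1: "\<forall>x1\<in>{0..1}. \<forall>x2\<in>{0..1}. \<forall>x3\<in>{0..1}.
            f12 x1 x2 + f13 x1 x3 + f23 x2 x3 \<le> cost (x1, x2, x3)"
    using ineq by (simp add: atLeastAtMost_iff)
  have e12: "(\<lambda>(x, y). f12 x y) = (\<lambda>_. 0::real)" by (auto simp: f12_def)
  have e13: "(\<lambda>(x, y). f13 x y) = F13" by (auto simp: F13_def)
  have e23: "(\<lambda>(x, y). f23 x y) = F23" by (auto simp: F23_def)
  have e13': "(\<lambda>p. f13 (fst p) (snd p)) = F13" by (auto simp: F13_def)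
  have e23': "(\<lambda>p. f23 (fst p) (snd p)) = F23" by (auto simp: F23_def)
  have e12': "(\<lambda>p. f12 (fst p) (snd p)) = (\<lambda>_. 0::real)" by (auto simp: f12_def)
  note B13 = BL[OF F_borel(1) F_int(1)]
  note B23 = BL[OF F_borel(2) F_int(2)]
  have P2: "integrable mu2L (\<lambda>(x, y). f12 x y)" unfolding e12 by simp
  have P3: "integrable mu2L (\<lambda>(x, y). f13 x y)" unfolding e13 by (rule B13(1))
  have P4: "integrable mu2L (\<lambda>(x, y). f23 x y)" unfolding e23 by (rule B23(1))
  have RHS: "(\<integral>p. f12 (fst p) (snd p) \<partial>mu2L) + (\<integral>p. f13 (fst p) (snd p) \<partial>mu2L)
                + (\<integral>p. f23 (fst p) (snd p) \<partial>mu2L) = (\<integral>q. F13 q \<partial>mu2) + (\<integral>q. F23 q \<partial>mu2)"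
    unfolding e12' e13' e23' B13(2) B23(2) by simp
  have P5: "\<forall>g12 g13 g23 :: real \<Rightarrow> real \<Rightarrow> real.
          integrable mu2L (\<lambda>(x, y). g12 x y) \<and> integrable mu2L (\<lambda>(x, y). g13 x y)
          \<and> integrable mu2L (\<lambda>(x, y). g23 x y)
          \<and> (\<forall>x1\<in>{0..1}. \<forall>x2\<in>{0..1}. \<forall>x3\<in>{0..1}.
                g12 x1 x2 + g13 x1 x3 + g23 x2 x3 \<le> cost (x1, x2, x3))
          \<longrightarrow> (\<integral>p. g12 (fst p) (snd p) \<partial>mu2L) + (\<integral>p. g13 (fst p) (snd p) \<partial>mu2L)
                + (\<integral>p. g23 (fst p) (snd p) \<partial>mu2L)
              \<le> (\<integral>p. f12 (fst p) (snd p) \<partial>mu2L) + (\<integral>p. f13 (fst p) (snd p) \<partial>mu2L)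
                + (\<integral>p. f23 (fst p) (snd p) \<partial>mu2L)"
  proof (intro allI impI, elim conjE)
    fix g12 g13 g23 :: "real \<Rightarrow> real \<Rightarrow> real"
    define G12 where "G12 = (\<lambda>p. g12 (fst p) (snd p))"
    define G13 where "G13 = (\<lambda>p. g13 (fst p) (snd p))"
    define G23 where "G23 = (\<lambda>p. g23 (fst p) (snd p))"
    assume i12: "integrable mu2L (\<lambda>(x, y). g12 x y)" and i13: "integrable mu2L (\<lambda>(x, y). g13 x y)"
      and i23: "integrable mu2L (\<lambda>(x, y). g23 x y)"
      and gle: "\<forall>x1\<in>{0..1}. \<forall>x2\<in>{0..1}. \<forall>x3\<in>{0..1}.
                g12 x1 x2 + g13 x1 x3 + g23 x2 x3 \<le> cost (x1, x2, x3)"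
    obtain h12 where h12: "h12 \<in> borel_measurable borel" "integrable mu2 h12" "AE q in mu2. G12 q = h12 q"
        "integral\<^sup>L mu2L G12 = integral\<^sup>L mu2 h12"
    proof -
      have "integrable mu2L G12" using i12 by (simp add: G12_def case_prod_beta')
      from L1[OF this] show ?thesis using that by blast
    qed
    obtain h13 where h13: "h13 \<in> borel_measurable borel" "integrable mu2 h13" "AE q in mu2. G13 q = h13 q"
        "integral\<^sup>L mu2L G13 = integral\<^sup>L mu2 h13"
    proof -
      have "integrable mu2L G13" using i13 by (simp add: G13_def case_prod_beta')
      from L1[OF this] show ?thesis using that by blast
    qed
    obtain h23 where h23: "h23 \<in> borel_measurable borel" "integrable mu2 h23" "AE q in mu2. G23 q = h23 q"
        "integral\<^sup>L mu2L G23 = integral\<^sup>L mu2 h23"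
    proof -
      have "integrable mu2L G23" using i23 by (simp add: G23_def case_prod_beta')
      from L1[OF this] show ?thesis using that by blast
    qed
    have hm: "h \<in> borel_measurable mu2" if "h \<in> borel_measurable borel" for h :: "real \<times> real \<Rightarrow> real"
      unfolding mu2_def using that
      by (intro measurable_restrict_space1) (simp add: measurable_cong_sets[OF sets_lborel refl])
    note t12 = transfer[OF pr_meas(1) marg12 hm[OF h12(1)] h12(2)]
    note t13 = transfer[OF pr_meas(2) marg13 hm[OF h13(1)] h13(2)]
    note t23 = transfer[OF pr_meas(3) marg23 hm[OF h23(1)] h23(2)]
    have a12: "AE p in piM. G12 (pr12 p) = h12 (pr12 p)"
    proof -
      have "AE q in distr piM mu2 pr12. G12 q = h12 q" unfolding marg12 by (rule h12(3))
      then show ?thesis by (rule AE_distrD[OF pr_meas(1)])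
    qed
    have a13: "AE p in piM. G13 (pr13 p) = h13 (pr13 p)"
    proof -
      have "AE q in distr piM mu2 pr13. G13 q = h13 q" unfolding marg13 by (rule h13(3))
      then show ?thesis by (rule AE_distrD[OF pr_meas(2)])
    qed
    have a23: "AE p in piM. G23 (pr23 p) = h23 (pr23 p)"
    proof -
      have "AE q in distr piM mu2 pr23. G23 q = h23 q" unfolding marg23 by (rule h23(3))
      then show ?thesis by (rule AE_distrD[OF pr_meas(3)])
    qed
    have "(\<integral>p. g12 (fst p) (snd p) \<partial>mu2L) + (\<integral>p. g13 (fst p) (snd p) \<partial>mu2L)
                + (\<integral>p. g23 (fst p) (snd p) \<partial>mu2L)
          = (\<integral>q. h12 q \<partial>mu2) + (\<integral>q. h13 q \<partial>mu2) + (\<integral>q. h23 q \<partial>mu2)"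
      using h12(4) h13(4) h23(4) by (simp add: G12_def G13_def G23_def)
    also have "\<dots> = (\<integral>p. h12 (pr12 p) + h13 (pr13 p) + h23 (pr23 p) \<partial>piM)"
      using t12 t13 t23 by simp
    also have "\<dots> \<le> (\<integral>p. cost p \<partial>piM)"
    proof (rule integral_mono_AE)
      show "integrable piM (\<lambda>p. h12 (pr12 p) + h13 (pr13 p) + h23 (pr23 p))" using t12 t13 t23 by simp
      show "integrable piM cost" by (rule cost_int[OF coupling_pi])
      show "AE p in piM. h12 (pr12 p) + h13 (pr13 p) + h23 (pr23 p) \<le> cost p"
        using a12 a13 a23 AE_space
      proof eventually_elim
        case (elim p)
        obtain x1 x2 x3 where pe: "p = (x1, x2, x3)" by (metis prod.collapse)
        from elim(4) have r: "x1 \<in> {0..1}" "x2 \<in> {0..1}" "x3 \<in> {0..1}"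
          by (auto simp: pe space_piM unit_cube_def)
        have "g12 x1 x2 + g13 x1 x3 + g23 x2 x3 \<le> cost (x1, x2, x3)"
          using gle r by blast
        with elim(1-3) show ?case
          by (simp add: pe G12_def G13_def G23_def pr12_def pr13_def pr23_def)
      qed
    qed
    also have "\<dots> = (\<integral>q. F13 q \<partial>mu2) + (\<integral>q. F23 q \<partial>mu2)" by (rule pi_cost)
    finally show "(\<integral>p. g12 (fst p) (snd p) \<partial>mu2L) + (\<integral>p. g13 (fst p) (snd p) \<partial>mu2L)
                + (\<integral>p. g23 (fst p) (snd p) \<partial>mu2L)
              \<le> (\<integral>p. f12 (fst p) (snd p) \<partial>mu2L) + (\<integral>p. f13 (fst p) (snd p) \<partial>mu2L)
                + (\<integral>p. f23 (fst p) (snd p) \<partial>mu2L)" unfolding RHS .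
  qed
  have P6: "\<exists>\<pi>. coupling \<pi>
          \<and> (AE p in \<pi>. (case p of (x1, x2, x3) \<Rightarrow> x1 + x2 + 3 * x3 \<in> \<int>))
          \<and> (\<forall>\<pi>'. coupling \<pi>' \<longrightarrow> (\<integral>p. cost p \<partial>\<pi>) \<le> (\<integral>p. cost p \<partial>\<pi>'))"
  proof (intro exI conjI allI impI)
    show "coupling piM" by (rule coupling_pi)
    show "AE p in piM. (case p of (x1, x2, x3) \<Rightarrow> x1 + x2 + 3 * x3 \<in> \<int>)"
      using AE_int by eventually_elim (auto split: prod.splits)
    fix \<pi>' assume "coupling \<pi>'"
    then show "(\<integral>p. cost p \<partial>piM) \<le> (\<integral>p. cost p \<partial>\<pi>')" unfolding pi_cost by (rule lower)
  qed
  show ?thesis using P1 P2 P3 P4 P5 P6 by (intro conjI)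
qed

end
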